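(* Let $G=(V,E)$ be a simple directed graph and $f\ge 0$ an integer. Then: (a) $G$ satisfies Condition CCS if and only if $G$ satisfies the 1-reach condition; (b) $G$ satisfies Condition CCA if and only if $G$ satisfies the 2-reach condition; (c) $G$ satisfies Condition BCS if and only if $G$ satisfies the 3-reach condition.
   Context: For $Y\subseteq V$, $G_Y$ is the subgraph induced by $Y$ and $\overline{X}=V\setminus X$. For node $v$ and $F\subseteq V\setminus\{v\}$, $reach_v(F)=\{u\in\overline{F}: u\text{ has a directed path to }v\text{ in }G_{\overline{F}}\}$. For disjoint non-empty $A,B\subseteq V$, a node $w\notin B$ is an incoming neighbor of $B$ if $(w,b)\in E$ for some $b\in B$; write $A\Rightarrow_x B$ if $A$ contains at least $x$ distinct incoming neighbors of $B$, and $A\not\Rightarrow_x B$ for its negation. Condition CCS: for any partition $F,L,C,R$ of $V$ with $L,R$ non-empty and $|F|\le f$, $L\cup C\Rightarrow_1 R$ or $R\cup C\Rightarrow_1 L$. Condition CCA: for any partition $L,C,R$ of $V$ with $L,R$ non-empty, $L\cup C\Rightarrow_{f+1} R$ or $R\cup C\Rightarrow_{f+1} L$. Condition BCS: for any partition $F,L,C,R$ of $V$ with $L,R$ non-empty and $|F|\le f$, $L\cup C\Rightarrow_{f+1} R$ or $R\cup C\Rightarrow_{f+1} L$. 1-reach: for any $F\subset V$ with $|F|\le f$ and any $u,v\in\overline{F}$, $reach_u(F)\cap reach_v(F)\neq\emptyset$. 2-reach: for any $u,v\in V$ and any $F_u,F_v\subseteq V$ with $|F_u|,|F_v|\le f$,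 $u\notin F_u$, $v\notin F_v$, $reach_v(F_v)\cap reach_u(F_u)\neq\emptyset$. 3-reach: for any $u,v\in V$ and any $F,F_u,F_v\subseteq V$ with $|F|,|F_u|,|F_v|\le f$, $u\notin F\cup F_u$, $v\notin F\cup F_v$, $reach_v(F\cup F_v)\cap reach_u(F\cup F_u)\neq\emptyset$. *)

theory Defs
  imports Main
begin

definition simple_digraph :: "'a set \<Rightarrow> ('a \<times> 'a) set \<Rightarrow> bool" where
  "simple_digraph V E \<longleftrightarrow> finite V \<and> E \<subseteq> V \<times> V \<and> (\<forall>v. (v, v) \<notin> E)"

definition induced_edges :: "('a \<times> 'a) set \<Rightarrow> 'a set \<Rightarrow> ('a \<times> 'a) set" where
  "induced_edges E Y = E \<inter> (Y \<times> Y)"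

definition reach :: "'a set \<Rightarrow> ('a \<times> 'a) set \<Rightarrow> 'a set \<Rightarrow> 'a \<Rightarrow> 'a set" where
  "reach V E F v = {u \<in> V - F. (u, v) \<in> (induced_edges E (V - F))\<^sup>*}"

definition in_nbrs :: "('a \<times> 'a) set \<Rightarrow> 'a set \<Rightarrow> 'a set" where
  "in_nbrs E B = {w. w \<notin> B \<and> (\<exists>b\<in>B. (w, b) \<in> E)}"

definition arrow :: "('a \<times> 'a) set \<Rightarrow> 'a set \<Rightarrow> nat \<Rightarrow> 'a set \<Rightarrow> bool" where
  "arrow E A x B \<longleftrightarrow> x \<le> card (A \<inter> in_nbrs E B)"

definition partition3 :: "'a set \<Rightarrow> 'a set \<Rightarrow> 'a set \<Rightarrow> 'a set \<Rightarrow> bool" where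
  "partition3 V L C R \<longleftrightarrow> L \<union> C \<union> R = V \<and> L \<inter> C = {} \<and> L \<inter> R = {} \<and> C \<inter> R = {}"

definition partition4 :: "'a set \<Rightarrow> 'a set \<Rightarrow> 'a set \<Rightarrow> 'a set \<Rightarrow> 'a set \<Rightarrow> bool" where
  "partition4 V F L C R \<longleftrightarrow> F \<union> L \<union> C \<union> R = V \<and> F \<inter> L = {} \<and> F \<inter> C = {} \<and>
     F \<inter> R = {} \<and> L \<inter> C = {} \<and> L \<inter> R = {} \<and> C \<inter> R = {}"

definition CCS :: "'a set \<Rightarrow> ('a \<times> 'a) set \<Rightarrow> nat \<Rightarrow> bool" where
  "CCS V E f \<longleftrightarrow> (\<forall>F L C R. partition4 V F L C R \<and> L \<noteq> {} \<and> R \<noteq> {} \<and> card F \<le> f \<longrightarrow>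
      arrow E (L \<union> C) 1 R \<or> arrow E (R \<union> C) 1 L)"

definition CCA :: "'a set \<Rightarrow> ('a \<times> 'a) set \<Rightarrow> nat \<Rightarrow> bool" where
  "CCA V E f \<longleftrightarrow> (\<forall>L C R. partition3 V L C R \<and> L \<noteq> {} \<and> R \<noteq> {} \<longrightarrow>
      arrow E (L \<union> C) (f + 1) R \<or> arrow E (R \<union> C) (f + 1) L)"

definition BCS :: "'a set \<Rightarrow> ('a \<times> 'a) set \<Rightarrow> nat \<Rightarrow> bool" where
  "BCS V E f \<longleftrightarrow> (\<forall>F L C R. partition4 V F L C R \<and> L \<noteq> {} \<and> R \<noteq> {} \<and> card F \<le> f \<longrightarrow>
      arrow E (L \<union> C) (f + 1) R \<or> arrow E (R \<union> C) (f + 1) L)"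

definition reach1 :: "'a set \<Rightarrow> ('a \<times> 'a) set \<Rightarrow> nat \<Rightarrow> bool" where
  "reach1 V E f \<longleftrightarrow> (\<forall>F u v. F \<subset> V \<and> card F \<le> f \<and> u \<in> V - F \<and> v \<in> V - F \<longrightarrow>
      reach V E F u \<inter> reach V E F v \<noteq> {})"

definition reach2 :: "'a set \<Rightarrow> ('a \<times> 'a) set \<Rightarrow> nat \<Rightarrow> bool" where
  "reach2 V E f \<longleftrightarrow> (\<forall>u v Fu Fv. u \<in> V \<and> v \<in> V \<and> Fu \<subseteq> V \<and> Fv \<subseteq> V \<and>
      card Fu \<le> f \<and> card Fv \<le> f \<and> u \<notin> Fu \<and> v \<notin> Fv \<longrightarrow>
      reach V E Fv v \<inter> reach V E Fu u \<noteq> {})"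

definition reach3 :: "'a set \<Rightarrow> ('a \<times> 'a) set \<Rightarrow> nat \<Rightarrow> bool" where
  "reach3 V E f \<longleftrightarrow> (\<forall>u v F Fu Fv. u \<in> V \<and> v \<in> V \<and> F \<subseteq> V \<and> Fu \<subseteq> V \<and> Fv \<subseteq> V \<and>
      card F \<le> f \<and> card Fu \<le> f \<and> card Fv \<le> f \<and> u \<notin> F \<union> Fu \<and> v \<notin> F \<union> Fv \<longrightarrow>
      reach V E (F \<union> Fv) v \<inter> reach V E (F \<union> Fu) u \<noteq> {})"

end

theory Submission
  imports Defs
begin

lemma reach_sub:
  assumes "v \<in> X" "in_nbrs E X \<inter> V \<subseteq> F'"
  shows "reach V E F' v \<subseteq> X"
proof
  fix u assume "u \<in> reach V E F' v"
  hence "(u, v) \<in> (induced_edges E (V - F'))\<^sup>*" by (simp add: reach_def)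
  thus "u \<in> X"
  proof (induction rule: converse_rtrancl_induct)
    case base thus ?case using assms by simp
  next
    case (step y z)
    show ?case
    proof (rule ccontr)
      assume "y \<notin> X"
      with step have "y \<in> in_nbrs E X" "y \<in> V" "y \<notin> F'"
        by (auto simp: in_nbrs_def induced_edges_def)
      with assms show False by blast
    qed
  qed
qed

lemma reach_in: "reach V E F' v \<subseteq> V - F'"
  by (auto simp: reach_def)

lemma reach_self: "v \<in> V - F' \<Longrightarrow> v \<in> reach V E F' v"
  by (auto simp: reach_def)

lemma in_nbrs_reach:
  assumes "E \<subseteq> V \<times> V"
  shows "in_nbrs E (reach V E F' v) \<subseteq> F'"
proof
  fix w assume w: "w \<in> in_nbrs E (reach V E F' v)"
  then obtain r where r: "r \<in> reach V E F' v" "(w, r) \<in> E" "w \<notin> reach V E F' v"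
    by (auto simp: in_nbrs_def)
  show "w \<in> F'"
  proof (rule ccontr)
    assume "w \<notin> F'"
    moreover have "w \<in> V" "r \<in> V - F'" using r assms reach_in[of V E F' v] by auto
    ultimately have "(w, r) \<in> induced_edges E (V - F')" using r
      by (auto simp: induced_edges_def)
    moreover have "(r, v) \<in> (induced_edges E (V - F'))\<^sup>*" using r by (simp add: reach_def)
    ultimately have "(w, v) \<in> (induced_edges E (V - F'))\<^sup>*"
      by (rule converse_rtrancl_into_rtrancl)
    with \<open>w \<in> V\<close> \<open>w \<notin> F'\<close> have "w \<in> reach V E F' v" by (simp add: reach_def)
    with r show False by blast
  qed
qed

lemma in_nbrs_V: "E \<subseteq> V \<times> V \<Longrightarrow> in_nbrs E B \<subseteq> V"
  by (auto simp: in_nbrs_def)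

lemma arrow_iff:
  assumes "finite V" "E \<subseteq> V \<times> V"
  shows "arrow E A k B \<longleftrightarrow> k \<le> card (A \<inter> in_nbrs E B)"
  by (simp add: arrow_def)

lemma fin_int:
  assumes "finite V" "E \<subseteq> V \<times> V"
  shows "finite (A \<inter> in_nbrs E B)"
  by (rule finite_subset[OF _ assms(1)]) (use in_nbrs_V[OF assms(2)] in blast)


lemma A1:
  assumes fin: "finite V" and EV: "E \<subseteq> V \<times> V" and that: "CCS V E f"
  shows "reach1 V E f"
  unfolding reach1_def
proof (intro allI impI notI)
  fix F u v
  assume h: "F \<subset> V \<and> card F \<le> f \<and> u \<in> V - F \<and> v \<in> V - F"
    and d: "reach V E F u \<inter> reach V E F v = {}"
  let ?L = "reach V E F u"
  let ?R = "reach V E F v"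
  let ?C = "V - F - ?L - ?R"
  have LR: "?L \<subseteq> V - F" "?R \<subseteq> V - F" by (rule reach_in)+
  have p: "partition4 V F ?L ?C ?R" using LR d h unfolding partition4_def by auto
  have ne: "?L \<noteq> {}" "?R \<noteq> {}" using reach_self[of u V F E] reach_self[of v V F E] h by auto
  have "arrow E (?L \<union> ?C) 1 ?R \<or> arrow E (?R \<union> ?C) 1 ?L"
    using that[unfolded CCS_def, rule_format, of F ?L ?C ?R] p ne h by blast
  hence "(?L \<union> ?C) \<inter> in_nbrs E ?R \<noteq> {} \<or> (?R \<union> ?C) \<inter> in_nbrs E ?L \<noteq> {}"
    by (auto simp: arrow_def)
  moreover have "in_nbrs E ?R \<subseteq> F" "in_nbrs E ?L \<subseteq> F"
    using in_nbrs_reach[OF EV] by blast+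
  ultimately show False using LR by blast
qed

lemma A2:
  assumes fin: "finite V" and EV: "E \<subseteq> V \<times> V" and that: "reach1 V E f"
  shows "CCS V E f"
  unfolding CCS_def
proof (intro allI impI)
  fix F L C R
  assume h: "partition4 V F L C R \<and> L \<noteq> {} \<and> R \<noteq> {} \<and> card F \<le> f"
  show "arrow E (L \<union> C) 1 R \<or> arrow E (R \<union> C) 1 L"
  proof (rule ccontr)
    assume "\<not> ?thesis"
    hence e1: "card ((L \<union> C) \<inter> in_nbrs E R) = 0" "card ((R \<union> C) \<inter> in_nbrs E L) = 0"
      by (auto simp: arrow_def)
    have e: "(L \<union> C) \<inter> in_nbrs E R = {}" "(R \<union> C) \<inter> in_nbrs E L = {}"
      using e1 fin_int[OF fin EV] by simp_all
    obtain u where u: "u \<in> L" using h by auto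
    obtain v where v: "v \<in> R" using h by auto
    have s1: "in_nbrs E R \<inter> V \<subseteq> F" using e h unfolding partition4_def in_nbrs_def by auto
    have s2: "in_nbrs E L \<inter> V \<subseteq> F" using e h unfolding partition4_def in_nbrs_def by auto
    have r: "reach V E F v \<subseteq> R" "reach V E F u \<subseteq> L"
      using reach_sub[OF v s1] reach_sub[OF u s2] by auto
    have "F \<subset> V" "u \<in> V - F" "v \<in> V - F" using h u v unfolding partition4_def by auto
    hence "reach V E F u \<inter> reach V E F v \<noteq> {}"
      using that[unfolded reach1_def, rule_format, of F u v] h by auto
    moreover have "L \<inter> R = {}" using h unfolding partition4_def by auto
    ultimately show False using r by auto
  qed
qed

lemma B1:
  assumes fin: "finite V" and EV: "E \<subseteq> V \<times> V" and that: "CCA V E f"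
  shows "reach2 V E f"
  unfolding reach2_def
proof (intro allI impI notI)
  fix u v Fu Fv
  assume h: "u \<in> V \<and> v \<in> V \<and> Fu \<subseteq> V \<and> Fv \<subseteq> V \<and> card Fu \<le> f \<and> card Fv \<le> f \<and> u \<notin> Fu \<and> v \<notin> Fv"
    and d: "reach V E Fv v \<inter> reach V E Fu u = {}"
  let ?L = "reach V E Fu u"
  let ?R = "reach V E Fv v"
  let ?C = "V - ?L - ?R"
  have LR: "?L \<subseteq> V - Fu" "?R \<subseteq> V - Fv" by (rule reach_in)+
  have p: "partition3 V ?L ?C ?R" using LR d unfolding partition3_def by auto
  have ne: "?L \<noteq> {}" "?R \<noteq> {}" using reach_self[of u V Fu E] reach_self[of v V Fv E] h by auto
  have "arrow E (?L \<union> ?C) (f+1) ?R \<or> arrow E (?R \<union> ?C) (f+1) ?L"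
    using that[unfolded CCA_def, rule_format, of ?L ?C ?R] p ne by blast
  moreover have "(?L \<union> ?C) \<inter> in_nbrs E ?R \<subseteq> Fv"
    using in_nbrs_reach[OF EV, of Fv v] by blast
  hence "card ((?L \<union> ?C) \<inter> in_nbrs E ?R) \<le> card Fv"
    using h fin by (meson card_mono finite_subset)
  moreover have "(?R \<union> ?C) \<inter> in_nbrs E ?L \<subseteq> Fu"
    using in_nbrs_reach[OF EV, of Fu u] by blast
  hence "card ((?R \<union> ?C) \<inter> in_nbrs E ?L) \<le> card Fu"
    using h fin by (meson card_mono finite_subset)
  ultimately show False using h by (auto simp: arrow_def)
qed

lemma B2:
  assumes fin: "finite V" and EV: "E \<subseteq> V \<times> V" and that: "reach2 V E f"
  shows "CCA V E f"
  unfolding CCA_def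
proof (intro allI impI)
  fix L C R
  assume h: "partition3 V L C R \<and> L \<noteq> {} \<and> R \<noteq> {}"
  show "arrow E (L \<union> C) (f+1) R \<or> arrow E (R \<union> C) (f+1) L"
  proof (rule ccontr)
    assume "\<not> ?thesis"
    hence c: "card ((L \<union> C) \<inter> in_nbrs E R) \<le> f" "card ((R \<union> C) \<inter> in_nbrs E L) \<le> f"
      by (auto simp: arrow_def)
    let ?Fv = "(L \<union> C) \<inter> in_nbrs E R"
    let ?Fu = "(R \<union> C) \<inter> in_nbrs E L"
    obtain u where u: "u \<in> L" using h by auto
    obtain v where v: "v \<in> R" using h by auto
    have s1: "in_nbrs E R \<inter> V \<subseteq> ?Fv" using h unfolding partition3_def in_nbrs_def by auto
    have s2: "in_nbrs E L \<inter> V \<subseteq> ?Fu" using h unfolding partition3_def in_nbrs_def by auto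
    have r: "reach V E ?Fv v \<subseteq> R" "reach V E ?Fu u \<subseteq> L"
      using reach_sub[OF v s1] reach_sub[OF u s2] by auto
    have "?Fu \<subseteq> V" "?Fv \<subseteq> V" "u \<in> V" "v \<in> V" "u \<notin> ?Fu" "v \<notin> ?Fv"
      using h u v unfolding partition3_def in_nbrs_def by auto
    hence "reach V E ?Fv v \<inter> reach V E ?Fu u \<noteq> {}"
      using that[unfolded reach2_def, rule_format, of u v ?Fu ?Fv] c by auto
    moreover have "L \<inter> R = {}" using h unfolding partition3_def by auto
    ultimately show False using r by auto
  qed
qed

lemma C1:
  assumes fin: "finite V" and EV: "E \<subseteq> V \<times> V" and that: "BCS V E f"
  shows "reach3 V E f"
  unfolding reach3_def
proof (intro allI impI notI)
  fix u v F Fu Fv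
  assume h: "u \<in> V \<and> v \<in> V \<and> F \<subseteq> V \<and> Fu \<subseteq> V \<and> Fv \<subseteq> V \<and> card F \<le> f \<and> card Fu \<le> f \<and> card Fv \<le> f \<and> u \<notin> F \<union> Fu \<and> v \<notin> F \<union> Fv"
    and d: "reach V E (F \<union> Fv) v \<inter> reach V E (F \<union> Fu) u = {}"
  let ?L = "reach V E (F \<union> Fu) u"
  let ?R = "reach V E (F \<union> Fv) v"
  let ?C = "V - F - ?L - ?R"
  have LR: "?L \<subseteq> V - (F \<union> Fu)" "?R \<subseteq> V - (F \<union> Fv)" by (rule reach_in)+
  have p: "partition4 V F ?L ?C ?R" using LR d h unfolding partition4_def by auto
  have ne: "?L \<noteq> {}" "?R \<noteq> {}" using reach_self[of u V "F \<union> Fu" E] reach_self[of v V "F \<union> Fv" E] h by auto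
  have "arrow E (?L \<union> ?C) (f+1) ?R \<or> arrow E (?R \<union> ?C) (f+1) ?L"
    using that[unfolded BCS_def, rule_format, of F ?L ?C ?R] p ne h by blast
  moreover have "(?L \<union> ?C) \<inter> in_nbrs E ?R \<subseteq> Fv"
    using in_nbrs_reach[OF EV, of "F \<union> Fv" v] LR by blast
  hence "card ((?L \<union> ?C) \<inter> in_nbrs E ?R) \<le> card Fv"
    using h fin by (meson card_mono finite_subset)
  moreover have "(?R \<union> ?C) \<inter> in_nbrs E ?L \<subseteq> Fu"
    using in_nbrs_reach[OF EV, of "F \<union> Fu" u] LR by blast
  hence "card ((?R \<union> ?C) \<inter> in_nbrs E ?L) \<le> card Fu"
    using h fin by (meson card_mono finite_subset)
  ultimately show False using h by (auto simp: arrow_def)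
qed

lemma C2:
  assumes fin: "finite V" and EV: "E \<subseteq> V \<times> V" and that: "reach3 V E f"
  shows "BCS V E f"
  unfolding BCS_def
proof (intro allI impI)
  fix F L C R
  assume h: "partition4 V F L C R \<and> L \<noteq> {} \<and> R \<noteq> {} \<and> card F \<le> f"
  show "arrow E (L \<union> C) (f+1) R \<or> arrow E (R \<union> C) (f+1) L"
  proof (rule ccontr)
    assume "\<not> ?thesis"
    hence c: "card ((L \<union> C) \<inter> in_nbrs E R) \<le> f" "card ((R \<union> C) \<inter> in_nbrs E L) \<le> f"
      by (auto simp: arrow_def)
    let ?Fv = "(L \<union> C) \<inter> in_nbrs E R"
    let ?Fu = "(R \<union> C) \<inter> in_nbrs E L"
    obtain u where u: "u \<in> L" using h by auto
    obtain v where v: "v \<in> R" using h by auto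
    have s1: "in_nbrs E R \<inter> V \<subseteq> F \<union> ?Fv" using h unfolding partition4_def in_nbrs_def by auto
    have s2: "in_nbrs E L \<inter> V \<subseteq> F \<union> ?Fu" using h unfolding partition4_def in_nbrs_def by auto
    have r: "reach V E (F \<union> ?Fv) v \<subseteq> R" "reach V E (F \<union> ?Fu) u \<subseteq> L"
      using reach_sub[OF v s1] reach_sub[OF u s2] by auto
    have "F \<subseteq> V" "?Fu \<subseteq> V" "?Fv \<subseteq> V" "u \<in> V" "v \<in> V" "u \<notin> F \<union> ?Fu" "v \<notin> F \<union> ?Fv"
      using h u v unfolding partition4_def in_nbrs_def by auto
    hence "reach V E (F \<union> ?Fv) v \<inter> reach V E (F \<union> ?Fu) u \<noteq> {}"
      using that[unfolded reach3_def, rule_format, of u v F ?Fu ?Fv] c h by auto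
    moreover have "L \<inter> R = {}" using h unfolding partition4_def by auto
    ultimately show False using r by auto
  qed
qed

theorem theoremA8:
  fixes V :: "'a set" and E :: "('a \<times> 'a) set" and f :: nat
  assumes "simple_digraph V E"
  shows "(CCS V E f \<longleftrightarrow> reach1 V E f) \<and> (CCA V E f \<longleftrightarrow> reach2 V E f) \<and>
         (BCS V E f \<longleftrightarrow> reach3 V E f)"
proof -
  have fin: "finite V" and EV: "E \<subseteq> V \<times> V" using assms by (auto simp: simple_digraph_def)
  show ?thesis using A1[OF fin EV] A2[OF fin EV] B1[OF fin EV] B2[OF fin EV] C1[OF fin EV] C2[OF fin EV]
    by blast
qed

end
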